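(* Let $H=(T_1,\dots,T_n,p_1,\dots,p_n)$ be a strategic game equipped with mixed strategies as described in the context. (i) If $\mathbf{MD}(\beta)$ holds for all $\beta<\alpha$, then $\overline{MGS}^{\alpha}=\overline{MLS}^{\alpha}$. In particular, if $\mathbf{MD}(\alpha)$ holds for all ordinals $\alpha$, then the outcomes of $\overline{MGS}$ and $\overline{MLS}$ coincide. (ii) If $\mathbf{MD}(\alpha)$ holds for all ordinals $\alpha$, then $\overline{MLS}$ is order independent. (iii) If $\mathbf{MD}(\beta)$ holds for all $\beta<\alpha+1$, then $MLS^{\alpha}=\overline{MLS}^{\alpha}$. In particular, if $\mathbf{MD}(\alpha)$ holds for all ordinals $\alpha$, then the outcome of $MLS$ exists and equals the outcome of $\overline{MLS}$.
   Context: A restriction of $H$ is $G=(S_1,\dots,S_n)$ with $S_i\subseteq T_i$ (possibly empty), ordered componentwise. Mixed strategies: for each $i$ a set $\Delta T_i\supseteq T_i$ of mixed strategies is given, and for each $S_i\subseteq T_i$ a set $\Delta S_i\subseteq\Delta T_i$ of mixed strategies over $S_i$; each $p_i$ is extended to $p_i:\Delta T_1\times\dots\times\Delta T_n\to\mathbb R$. For $m_i\in\Delta T_i$ and $s_i\in T_i$, $m_i\succ_G s_i$ means $p_i(m_i,s_{-i})>p_i(s_i,s_{-i})$ for all $s_{-i}\in\prod_{j\ne i}S_j$ (vacuous if empty). $MGS(G):=(S_1',\dots,S_n')$ with $S_i':=\{s_i\in T_i\mid\neg\exists m_i\in\Delta T_i:\ m_i\succ_G s_i\}$; $MLS(G):=(S_1',\dots,S_n')$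 with $S_i':=\{s_i\in T_i\mid\neg\exists m_i\in\Delta S_i:\ m_i\succ_G s_i\}$; $\overline{T}(G):=T(G)\cap G$. Iterations: $T^0:=H$, $T^{\alpha+1}:=T(T^\alpha)$, $T^\beta:=\bigcap_{\alpha<\beta}T^\alpha$ for limit $\beta$; outcome $T^{\alpha_T}$, $\alpha_T$ the least $\alpha$ with $T^{\alpha+1}=T^\alpha$. $R$ is a relaxation of $T$ if for all ordinals $\alpha$: (1) $T(R^\alpha)\subseteq R(R^\alpha)$; (2) if $T(R^\alpha)\subseteq R^\alpha$ then $R(R^\alpha)\subseteq R^\alpha$; (3) if $R(R^\alpha)=R^\alpha$ then $T(R^\alpha)=R^\alpha$. $T$ is order independent if the set of outcomes of relaxations of $T$ has at most one element. Property $\mathbf{MD}(\alpha)$: for every relaxation $R$ of $\overline{MLS}$, writing $R^\alpha=(S_1,\dots,S_n)$, every $i$ and every $s_i\in T_i$: if some $m_i\in\Delta T_i$ has $m_i\succ_{R^\alpha}s_i$, then some $m_i^*\in\Delta S_i$ has $m_i^*\succ_{R^\alpha}s_i$. *)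

theory Defs
  imports Complex_Main
begin

text \<open>Pure and mixed strategies share the type 's.
  A restriction of H = (T_1,...,T_n) is a function G :: 'i => 's set with G i a subset of T i;
  the order is the componentwise (pointwise) order.  A payoff p i is defined on all
  profiles 'i => 's (in particular on mixed profiles).\<close>

definition dominates ::
  "('i \<Rightarrow> ('i \<Rightarrow> 's) \<Rightarrow> real) \<Rightarrow> ('i \<Rightarrow> 's set) \<Rightarrow> 'i \<Rightarrow> 's \<Rightarrow> 's \<Rightarrow> bool" where
  "dominates p G i m s \<longleftrightarrow>
     (\<forall>q. (\<forall>j. j \<noteq> i \<longrightarrow> q j \<in> G j) \<longrightarrow> p i (q(i := m)) > p i (q(i := s)))"

definition MGS ::
  "('i \<Rightarrow> ('i \<Rightarrow> 's) \<Rightarrow> real) \<Rightarrow> ('i \<Rightarrow> 's set) \<Rightarrow> ('i \<Rightarrow> 's set)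
     \<Rightarrow> ('i \<Rightarrow> 's set) \<Rightarrow> ('i \<Rightarrow> 's set)" where
  "MGS p T DT G = (\<lambda>i. {s \<in> T i. \<not> (\<exists>m \<in> DT i. dominates p G i m s)})"

definition MLS ::
  "('i \<Rightarrow> ('i \<Rightarrow> 's) \<Rightarrow> real) \<Rightarrow> ('i \<Rightarrow> 's set) \<Rightarrow> ('i \<Rightarrow> 's set \<Rightarrow> 's set)
     \<Rightarrow> ('i \<Rightarrow> 's set) \<Rightarrow> ('i \<Rightarrow> 's set)" where
  "MLS p T D G = (\<lambda>i. {s \<in> T i. \<not> (\<exists>m \<in> D i (G i). dominates p G i m s)})"

definition bar :: "('g::lattice \<Rightarrow> 'g) \<Rightarrow> 'g \<Rightarrow> 'g" where
  "bar F G = inf (F G) G"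

text \<open>Transfinite iteration indexed by a well-ordered type 'o:
  T^0 = H, T^(a+1) = T(T^a), T^b = Inf of earlier iterates for limit b.
  (Zero and limits are treated uniformly as H inter the infimum of the earlier iterates;
  all operators considered return restrictions of H, so this is the same.)\<close>
definition iter :: "('g::complete_lattice \<Rightarrow> 'g) \<Rightarrow> 'g \<Rightarrow> 'o::wellorder \<Rightarrow> 'g" where
  "iter F H = wfrec {(x, y). x < y}
     (\<lambda>f a. if (\<exists>b<a. \<forall>c<a. c \<le> b)
            then F (f (THE b. b < a \<and> (\<forall>c<a. c \<le> b)))
            else inf H (INF b\<in>{b. b < a}. f b))"

definition is_relaxation ::
  "'o::wellorder itself \<Rightarrow> ('g::complete_lattice \<Rightarrow> 'g) \<Rightarrow> ('g \<Rightarrow> 'g) \<Rightarrow> 'g \<Rightarrow> bool" where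
  "is_relaxation _ Tp R H \<longleftrightarrow>
     (\<forall>G. G \<le> H \<longrightarrow> R G \<le> H) \<and>
     (\<forall>\<alpha>::'o. Tp (iter R H \<alpha>) \<le> R (iter R H \<alpha>)
        \<and> (Tp (iter R H \<alpha>) \<le> iter R H \<alpha> \<longrightarrow> R (iter R H \<alpha>) \<le> iter R H \<alpha>)
        \<and> (R (iter R H \<alpha>) = iter R H \<alpha> \<longrightarrow> Tp (iter R H \<alpha>) = iter R H \<alpha>))"

definition is_outcome ::
  "'o::wellorder itself \<Rightarrow> ('g::complete_lattice \<Rightarrow> 'g) \<Rightarrow> 'g \<Rightarrow> 'g \<Rightarrow> bool" where
  "is_outcome _ F H X \<longleftrightarrow>
     (\<exists>\<alpha>::'o. F (iter F H \<alpha>) = iter F H \<alpha>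
        \<and> (\<forall>\<beta><\<alpha>. F (iter F H \<beta>) \<noteq> iter F H \<beta>) \<and> X = iter F H \<alpha>)"

definition order_independent ::
  "'o::wellorder itself \<Rightarrow> ('g::complete_lattice \<Rightarrow> 'g) \<Rightarrow> 'g \<Rightarrow> bool" where
  "order_independent ot F H \<longleftrightarrow>
     (\<forall>R1 R2 X1 X2. is_relaxation ot F R1 H \<and> is_relaxation ot F R2 H
        \<and> is_outcome ot R1 H X1 \<and> is_outcome ot R2 H X2 \<longrightarrow> X1 = X2)"

definition MD ::
  "('i \<Rightarrow> ('i \<Rightarrow> 's) \<Rightarrow> real) \<Rightarrow> ('i \<Rightarrow> 's set) \<Rightarrow> ('i \<Rightarrow> 's set) \<Rightarrow> ('i \<Rightarrow> 's set \<Rightarrow> 's set)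
     \<Rightarrow> 'o::wellorder \<Rightarrow> bool" where
  "MD p T DT D \<alpha> \<longleftrightarrow>
     (\<forall>R. is_relaxation TYPE('o) (bar (MLS p T D)) R T \<longrightarrow>
        (\<forall>i. \<forall>s \<in> T i. (\<exists>m \<in> DT i. dominates p (iter R T \<alpha>) i m s)
            \<longrightarrow> (\<exists>m \<in> D i (iter R T \<alpha> i). dominates p (iter R T \<alpha>) i m s)))"

end

theory Submission
  imports Defs
begin

lemma iter_unfold:
  "iter F H (a::'o::wellorder) = (if (\<exists>b<a. \<forall>c<a. c \<le> b)
            then F (iter F H (THE b. b < a \<and> (\<forall>c<a. c \<le> b)))
            else inf H (INF b\<in>{b. b < a}. iter F H b))"
proof -
  have "iter F H a = (\<lambda>f a. if (\<exists>b<a. \<forall>c<a. c \<le> b)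
            then F (f (THE b. b < a \<and> (\<forall>c<a. c \<le> b)))
            else inf H (INF b\<in>{b. b < a}. f b)) (cut (iter F H) {(x, y). x < y} a) a"
    unfolding iter_def by (rule wfrec[OF wf])
  also have "\<dots> = (if (\<exists>b<a. \<forall>c<a. c \<le> b)
            then F (iter F H (THE b. b < a \<and> (\<forall>c<a. c \<le> b)))
            else inf H (INF b\<in>{b. b < a}. iter F H b))"
  proof (cases "\<exists>b<a. \<forall>c<a. c \<le> b")
    case True
    then obtain b where b: "b < a" "\<forall>c<a. c \<le> b" by blast
    have "(THE b. b < a \<and> (\<forall>c<a. c \<le> b)) = b"
      using b by (intro the_equality) (auto intro: order.antisym)
    then show ?thesis using True b by (simp add: cut_apply)
  next
    case False
    then have nF: "\<not> (\<exists>b<a. \<forall>c<a. c \<le> b)" by blast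
    have "(INF b\<in>{b. b < a}. cut (iter F H) {(x, y). x < y} a b) = (INF b\<in>{b. b < a}. iter F H b)"
      by (intro INF_cong) (auto simp: cut_apply)
    then show ?thesis using nF by (simp only: if_False)
  qed
  finally show ?thesis .
qed

lemma iter_succ:
  "(b::'o::wellorder) < a \<Longrightarrow> \<forall>c<a. c \<le> b \<Longrightarrow> iter F H a = F (iter F H b)"
proof -
  assume b: "b < a" "\<forall>c<a. c \<le> b"
  have "(THE b. b < a \<and> (\<forall>c<a. c \<le> b)) = b"
    using b by (intro the_equality) (auto intro: order.antisym)
  then show ?thesis using b by (subst iter_unfold) auto
qed

lemma iter_lim:
  "\<not> (\<exists>b<a. \<forall>c<a. c \<le> b) \<Longrightarrow> iter F H (a::'o::wellorder) = inf H (INF b\<in>{b. b < a}. iter F H b)"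
  by (subst iter_unfold) auto

lemma iter_cases_induct:
  fixes P :: "'o::wellorder \<Rightarrow> bool"
  assumes succ: "\<And>a b. b < a \<Longrightarrow> \<forall>c<a. c \<le> b \<Longrightarrow> (\<And>c. c < a \<Longrightarrow> P c) \<Longrightarrow> P a"
    and lim: "\<And>a. \<not> (\<exists>b<a. \<forall>c<a. c \<le> b) \<Longrightarrow> (\<And>c. c < a \<Longrightarrow> P c) \<Longrightarrow> P a"
  shows "P a"
proof (induction a rule: less_induct)
  case (less a)
  show ?case
  proof (cases "\<exists>b<a. \<forall>c<a. c \<le> b")
    case True then show ?thesis using succ less by blast
  next
    case False then show ?thesis using lim less by blast
  qed
qed

lemma iter_le_H:
  assumes "\<forall>G. G \<le> H \<longrightarrow> F G \<le> H"
  shows "iter F H (a::'o::wellorder) \<le> (H::'g::complete_lattice)"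
proof (induction a rule: iter_cases_induct)
  case (1 a b) then show ?case using assms by (simp add: iter_succ)
next
  case (2 a) then show ?case by (simp add: iter_lim)
qed

lemma dom_anti:
  "G' \<le> G \<Longrightarrow> dominates p G i m s \<Longrightarrow> dominates p G' i m s"
  unfolding dominates_def le_fun_def by blast

lemma MGS_le_MLS:
  assumes "\<forall>i S. S \<subseteq> T i \<longrightarrow> D i S \<subseteq> DT i" "G \<le> T"
  shows "MGS p T DT G \<le> MLS p T D G"
  using assms unfolding MGS_def MLS_def le_fun_def by blast

lemma MGS_anti: "G' \<le> G \<Longrightarrow> MGS p T DT G' \<le> MGS p T DT G"
  unfolding MGS_def le_fun_def using dom_anti[of G' G p] by (auto simp: le_fun_def)

lemma bar_le: "bar F G \<le> G" by (simp add: bar_def)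

lemma MLS_le_T: "MLS p T D G \<le> T" unfolding MLS_def le_fun_def by auto
lemma MGS_le_T: "MGS p T DT G \<le> T" unfolding MGS_def le_fun_def by auto

lemma iter_bar_le_T: "iter (bar F) (T::'i \<Rightarrow> 's set) (a::'o::wellorder) \<le> T"
  by (rule iter_le_H) (auto intro: order_trans[OF bar_le])

lemma bar_relax: "is_relaxation TYPE('o::wellorder) (bar F) (bar F) (T::'i \<Rightarrow> 's set)"
  unfolding is_relaxation_def by (auto intro: order_trans[OF bar_le])

lemma relax_le_T: "is_relaxation TYPE('o::wellorder) Tp R (T::'i \<Rightarrow> 's set) \<Longrightarrow> iter R T (a::'o) \<le> T"
  unfolding is_relaxation_def by (rule iter_le_H) blast

lemma MD_eq:
  assumes "\<forall>i S. S \<subseteq> T i \<longrightarrow> D i S \<subseteq> DT i"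
    and md: "MD p T DT D (b::'o::wellorder)"
    and R: "is_relaxation TYPE('o) (bar (MLS p T D)) R T"
  shows "MLS p T D (iter R T b) = MGS p T DT (iter R T b)"
proof (rule order.antisym)
  show "MGS p T DT (iter R T b) \<le> MLS p T D (iter R T b)"
    using MGS_le_MLS[OF assms(1) relax_le_T[OF R]] .
  have le: "iter R T b \<le> T" using relax_le_T[OF R] .
  have m: "\<forall>i. \<forall>s \<in> T i. (\<exists>m \<in> DT i. dominates p (iter R T b) i m s)
            \<longrightarrow> (\<exists>m \<in> D i (iter R T b i). dominates p (iter R T b) i m s)"
    using md R unfolding MD_def by blast
  show "MLS p T D (iter R T b) \<le> MGS p T DT (iter R T b)"
    unfolding MLS_def MGS_def le_fun_def using m by blast
qed

lemma MGS_X_le: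
  assumes "\<forall>i S. S \<subseteq> T i \<longrightarrow> D i S \<subseteq> DT i"
  shows "MGS p T DT (iter (bar (MLS p T D)) T (a::'o::wellorder)) \<le> iter (bar (MLS p T D)) T a"
proof (induction a rule: iter_cases_induct)
  case (1 a b)
  let ?X = "iter (bar (MLS p T D)) T"
  have e: "?X a = inf (MLS p T D (?X b)) (?X b)" using 1 by (simp add: iter_succ bar_def)
  have h0: "?X a \<le> ?X b" unfolding e by simp
  have h1: "MGS p T DT (?X a) \<le> MGS p T DT (?X b)" using h0 by (rule MGS_anti)
  have h2: "MGS p T DT (?X b) \<le> ?X b" using 1 by blast
  have h3: "MGS p T DT (?X b) \<le> MLS p T D (?X b)" using MGS_le_MLS[OF assms iter_bar_le_T] .
  have "MGS p T DT (?X a) \<le> inf (MLS p T D (?X b)) (?X b)"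
    using order_trans[OF h1 h2] order_trans[OF h1 h3] by simp
  then show ?case by (simp only: e)
next
  case (2 a)
  let ?X = "iter (bar (MLS p T D)) T"
  have e: "?X a = inf T (INF b\<in>{b. b < a}. ?X b)" using 2 by (simp add: iter_lim)
  have "MGS p T DT (?X a) \<le> ?X b" if "b < a" for b
  proof -
    have "?X a \<le> ?X b" unfolding e using that by (simp add: INF_lower2 le_infI2)
    then have "MGS p T DT (?X a) \<le> MGS p T DT (?X b)" by (rule MGS_anti)
    then show ?thesis using 2 that order_trans by blast
  qed
  then have "MGS p T DT (?X a) \<le> inf T (INF b\<in>{b. b < a}. ?X b)"
    using MGS_le_T[of p T DT "?X a"] by (auto intro: INF_greatest)
  then show ?case by (simp only: e)
qed

lemma bar_MLS_X:
  assumes A: "\<forall>i S. S \<subseteq> T i \<longrightarrow> D i S \<subseteq> DT i"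
    and md: "MD p T DT D (b::'o::wellorder)"
  shows "bar (MLS p T D) (iter (bar (MLS p T D)) T b) = MLS p T D (iter (bar (MLS p T D)) T b)"
    and "MLS p T D (iter (bar (MLS p T D)) T b) = MGS p T DT (iter (bar (MLS p T D)) T b)"
proof -
  show e: "MLS p T D (iter (bar (MLS p T D)) T b) = MGS p T DT (iter (bar (MLS p T D)) T b)"
    by (rule MD_eq[OF A md bar_relax])
  have "MGS p T DT (iter (bar (MLS p T D)) T b) \<le> iter (bar (MLS p T D)) T b"
    by (rule MGS_X_le[OF A])
  then show "bar (MLS p T D) (iter (bar (MLS p T D)) T b) = MLS p T D (iter (bar (MLS p T D)) T b)"
    unfolding bar_def e by (rule inf_absorb1)
qed

lemma part1:
  assumes A: "\<forall>i S. S \<subseteq> T i \<longrightarrow> D i S \<subseteq> DT i"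
  shows "(\<forall>\<beta><\<alpha>. MD p T DT D \<beta>) \<longrightarrow>
        iter (bar (MGS p T DT)) T (\<alpha>::'o::wellorder) = iter (bar (MLS p T D)) T \<alpha>"
proof (induction \<alpha> rule: iter_cases_induct)
  case (1 a b)
  show ?case
  proof
    assume md: "\<forall>\<beta><a. MD p T DT D \<beta>"
    then have ih: "iter (bar (MGS p T DT)) T b = iter (bar (MLS p T D)) T b"
      using 1 by auto
    have mb: "MD p T DT D b" using md 1 by auto
    have "iter (bar (MGS p T DT)) T a = bar (MGS p T DT) (iter (bar (MGS p T DT)) T b)"
      using 1 by (simp add: iter_succ)
    also have "\<dots> = bar (MLS p T D) (iter (bar (MLS p T D)) T b)"
      unfolding ih bar_def bar_MLS_X(2)[OF A mb] ..
    also have "\<dots> = iter (bar (MLS p T D)) T a"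
      using 1 by (simp add: iter_succ)
    finally show "iter (bar (MGS p T DT)) T a = iter (bar (MLS p T D)) T a" .
  qed
next
  case (2 a)
  show ?case
  proof
    assume md: "\<forall>\<beta><a. MD p T DT D \<beta>"
    then have "\<forall>c<a. iter (bar (MGS p T DT)) T c = iter (bar (MLS p T D)) T c"
      using 2 by auto
    then have "(INF b\<in>{b. b < a}. iter (bar (MGS p T DT)) T b) = (INF b\<in>{b. b < a}. iter (bar (MLS p T D)) T b)"
      by (intro INF_cong) auto
    then show "iter (bar (MGS p T DT)) T a = iter (bar (MLS p T D)) T a"
      using 2 by (simp add: iter_lim)
  qed
qed

lemma part4:
  assumes A: "\<forall>i S. S \<subseteq> T i \<longrightarrow> D i S \<subseteq> DT i"
  shows "(\<forall>\<beta><\<alpha>. MD p T DT D \<beta>) \<longrightarrow>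
        iter (MLS p T D) T (\<alpha>::'o::wellorder) = iter (bar (MLS p T D)) T \<alpha>"
proof (induction \<alpha> rule: iter_cases_induct)
  case (1 a b)
  show ?case
  proof
    assume md: "\<forall>\<beta><a. MD p T DT D \<beta>"
    then have ih: "iter (MLS p T D) T b = iter (bar (MLS p T D)) T b"
      using 1 by auto
    have mb: "MD p T DT D b" using md 1 by auto
    have "iter (MLS p T D) T a = MLS p T D (iter (MLS p T D) T b)"
      using 1 by (simp add: iter_succ)
    also have "\<dots> = bar (MLS p T D) (iter (bar (MLS p T D)) T b)"
      unfolding ih bar_MLS_X(1)[OF A mb] ..
    also have "\<dots> = iter (bar (MLS p T D)) T a"
      using 1 by (simp add: iter_succ)
    finally show "iter (MLS p T D) T a = iter (bar (MLS p T D)) T a" .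
  qed
next
  case (2 a)
  show ?case
  proof
    assume md: "\<forall>\<beta><a. MD p T DT D \<beta>"
    then have "\<forall>c<a. iter (MLS p T D) T c = iter (bar (MLS p T D)) T c"
      using 2 by auto
    then have "(INF b\<in>{b. b < a}. iter (MLS p T D) T b) = (INF b\<in>{b. b < a}. iter (bar (MLS p T D)) T b)"
      by (intro INF_cong) auto
    then show "iter (MLS p T D) T a = iter (bar (MLS p T D)) T a"
      using 2 by (simp add: iter_lim)
  qed
qed

lemma fix_le:
  assumes A: "\<forall>i S. S \<subseteq> T i \<longrightarrow> D i S \<subseteq> DT i"
    and R1: "is_relaxation TYPE('o::wellorder) (bar (MLS p T D)) R1 T"
    and R2: "is_relaxation TYPE('o) (bar (MLS p T D)) R2 T"
    and fx: "R2 (iter R2 T a2) = iter R2 T (a2::'o)"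
    and md: "MD p T DT D a2"
  shows "iter R2 T a2 \<le> iter R1 T (a::'o)"
proof -
  let ?X = "iter R2 T a2"
  have "bar (MLS p T D) ?X = ?X" using R2 fx unfolding is_relaxation_def by blast
  then have "?X \<le> MLS p T D ?X" unfolding bar_def by (metis inf.absorb_iff2 inf_le1)
  then have XM: "?X \<le> MGS p T DT ?X" using MD_eq[OF A md R2] by simp
  have XT: "?X \<le> T" by (rule relax_le_T[OF R2])
  show ?thesis
  proof (induction a rule: iter_cases_induct)
    case (1 a b)
    have ih: "?X \<le> iter R1 T b" using 1 by blast
    have "?X \<le> MGS p T DT (iter R1 T b)" using XM MGS_anti[OF ih] order_trans by blast
    also have "\<dots> \<le> MLS p T D (iter R1 T b)" by (rule MGS_le_MLS[OF A relax_le_T[OF R1]])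
    finally have "?X \<le> bar (MLS p T D) (iter R1 T b)" unfolding bar_def using ih by simp
    also have "\<dots> \<le> R1 (iter R1 T b)" using R1 unfolding is_relaxation_def by blast
    also have "\<dots> = iter R1 T a" using 1 by (simp add: iter_succ)
    finally show ?case .
  next
    case (2 a)
    have "?X \<le> inf T (INF b\<in>{b. b < a}. iter R1 T b)"
      using XT 2 by (auto intro: INF_greatest)
    moreover have e: "iter R1 T a = inf T (INF b\<in>{b. b < a}. iter R1 T b)"
      by (rule iter_lim) (use 2 in blast)
    ultimately show ?case by (simp only: e)
  qed
qed

lemma iter_anti:
  assumes "\<forall>G. F G \<le> G"
  shows "a \<le> b \<Longrightarrow> iter F H (b::'o::wellorder) \<le> iter F H a"
proof (induction b rule: iter_cases_induct)
  case (1 b c)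
  show ?case
  proof (cases "a = b")
    case False
    then have "a \<le> c" using 1 by (meson le_less not_le)
    then have "iter F H c \<le> iter F H a" using 1 by blast
    moreover have "iter F H b \<le> iter F H c" using 1 assms by (simp add: iter_succ)
    ultimately show ?thesis by simp
  qed simp
next
  case (2 b)
  show ?case
  proof (cases "a = b")
    case False
    then have "a < b" using 2 by simp
    then show ?thesis using 2 by (simp add: iter_lim le_infI2 INF_lower)
  qed simp
qed

lemma outcome_exists:
  assumes "\<forall>G. F G \<le> G"
    and ninj: "\<nexists>f::'o \<Rightarrow> 'g. inj f"
  shows "\<exists>X. is_outcome TYPE('o::wellorder) F (H::'g::complete_lattice) X"
proof -
  have "\<exists>a::'o. F (iter F H a) = iter F H a"
  proof (rule ccontr)
    assume nf: "\<not> ?thesis"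
    have "inj (iter F H :: 'o \<Rightarrow> 'g)"
    proof (rule injI)
      fix x y :: 'o
      assume eq: "iter F H x = iter F H y"
      show "x = y"
      proof (rule ccontr)
        assume "x \<noteq> y"
        then have "x < y \<or> y < x" by auto
        then obtain a b :: 'o where ab: "a < b" "iter F H a = iter F H b"
        proof
          assume "x < y" then show ?thesis using that eq by blast
        next
          assume "y < x" then show ?thesis using that eq[symmetric] by blast
        qed
        define s where "s = (LEAST z. a < z)"
        have as: "a < s" unfolding s_def using ab(1) by (rule LeastI)
        have sb: "s \<le> b" unfolding s_def using ab(1) by (rule Least_le)
        have "\<forall>c<s. c \<le> a"
          using not_less_Least unfolding s_def by (metis not_le)
        then have "iter F H s = F (iter F H a)" using as by (simp add: iter_succ)
        moreover have "iter F H b \<le> iter F H s" using iter_anti[OF assms(1) sb] .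
        moreover have "F (iter F H a) \<le> iter F H a" using assms(1) by blast
        ultimately have "F (iter F H a) = iter F H a" using ab(2) by simp
        then show False using nf by blast
      qed
    qed
    then show False using ninj by blast
  qed
  then obtain a0 :: 'o where "F (iter F H a0) = iter F H a0" by blast
  define a where "a = (LEAST a::'o. F (iter F H a) = iter F H a)"
  have "F (iter F H a) = iter F H a" unfolding a_def by (rule LeastI) fact
  moreover have "\<forall>\<beta><a. F (iter F H \<beta>) \<noteq> iter F H \<beta>"
    unfolding a_def using not_less_Least by blast
  ultimately show ?thesis unfolding is_outcome_def by blast
qed

theorem mainTheorem12:
  fixes T :: "'i::finite \<Rightarrow> 's set"
    and DT :: "'i \<Rightarrow> 's set"
    and D :: "'i \<Rightarrow> 's set \<Rightarrow> 's set"
    and p :: "'i \<Rightarrow> ('i \<Rightarrow> 's) \<Rightarrow> real"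
  assumes "\<forall>i. T i \<subseteq> DT i"
    and "\<forall>i S. S \<subseteq> T i \<longrightarrow> D i S \<subseteq> DT i"
    and "\<forall>i. D i (T i) = DT i"
  shows
    "(\<forall>\<alpha>::'o::wellorder. (\<forall>\<beta><\<alpha>. MD p T DT D \<beta>) \<longrightarrow>
        iter (bar (MGS p T DT)) T \<alpha> = iter (bar (MLS p T D)) T \<alpha>)
     \<and> ((\<forall>\<alpha>::'o. MD p T DT D \<alpha>) \<longrightarrow>
        (\<forall>X. is_outcome TYPE('o) (bar (MGS p T DT)) T X
              \<longleftrightarrow> is_outcome TYPE('o) (bar (MLS p T D)) T X))
     \<and> ((\<forall>\<alpha>::'o. MD p T DT D \<alpha>) \<longrightarrow> order_independent TYPE('o) (bar (MLS p T D)) T)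
     \<and> (\<forall>\<alpha>::'o. (\<forall>\<beta>\<le>\<alpha>. MD p T DT D \<beta>) \<longrightarrow>
        iter (MLS p T D) T \<alpha> = iter (bar (MLS p T D)) T \<alpha>)
     \<and> ((\<forall>\<alpha>::'o. MD p T DT D \<alpha>) \<longrightarrow>
        (\<forall>X. is_outcome TYPE('o) (MLS p T D) T X
              \<longleftrightarrow> is_outcome TYPE('o) (bar (MLS p T D)) T X)
        \<and> ((\<nexists>f::'o \<Rightarrow> ('i \<Rightarrow> 's set). inj f) \<longrightarrow> (\<exists>X. is_outcome TYPE('o) (MLS p T D) T X)))"
proof -
  have A: "\<forall>i S. S \<subseteq> T i \<longrightarrow> D i S \<subseteq> DT i" using assms(2) .
  let ?X = "iter (bar (MLS p T D)) T :: 'o \<Rightarrow> _"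
  have P1: "\<forall>\<alpha>::'o::wellorder. (\<forall>\<beta><\<alpha>. MD p T DT D \<beta>) \<longrightarrow>
        iter (bar (MGS p T DT)) T \<alpha> = iter (bar (MLS p T D)) T \<alpha>"
    using part1[OF A] by blast
  have P4: "\<forall>\<alpha>::'o. (\<forall>\<beta>\<le>\<alpha>. MD p T DT D \<beta>) \<longrightarrow>
        iter (MLS p T D) T \<alpha> = iter (bar (MLS p T D)) T \<alpha>"
  proof (intro allI impI)
    fix \<alpha> :: 'o
    assume "\<forall>\<beta>\<le>\<alpha>. MD p T DT D \<beta>"
    then have "\<forall>\<beta><\<alpha>. MD p T DT D \<beta>" by auto
    then show "iter (MLS p T D) T \<alpha> = iter (bar (MLS p T D)) T \<alpha>"
      using part4[OF A, of \<alpha> p] by blast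
  qed
  have P2: "(\<forall>\<alpha>::'o. MD p T DT D \<alpha>) \<longrightarrow>
        (\<forall>X. is_outcome TYPE('o) (bar (MGS p T DT)) T X
              \<longleftrightarrow> is_outcome TYPE('o) (bar (MLS p T D)) T X)"
  proof (intro impI allI)
    assume md: "\<forall>\<alpha>::'o. MD p T DT D \<alpha>"
    fix X
    have eqY: "iter (bar (MGS p T DT)) T = ?X" using P1 md by auto
    have eqF: "bar (MGS p T DT) (?X a) = bar (MLS p T D) (?X a)" for a
      using bar_MLS_X(2)[OF A md[rule_format, of a]] by (simp add: bar_def)
    show "is_outcome TYPE('o) (bar (MGS p T DT)) T X
              \<longleftrightarrow> is_outcome TYPE('o) (bar (MLS p T D)) T X"
      unfolding is_outcome_def eqY eqF ..
  qed
  have P3: "(\<forall>\<alpha>::'o. MD p T DT D \<alpha>) \<longrightarrow> order_independent TYPE('o) (bar (MLS p T D)) T"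
  proof (intro impI)
    assume md: "\<forall>\<alpha>::'o. MD p T DT D \<alpha>"
    show "order_independent TYPE('o) (bar (MLS p T D)) T"
      unfolding order_independent_def
    proof (intro allI impI)
      fix R1 R2 X1 X2
      assume h: "is_relaxation TYPE('o) (bar (MLS p T D)) R1 T \<and>
        is_relaxation TYPE('o) (bar (MLS p T D)) R2 T \<and>
        is_outcome TYPE('o) R1 T X1 \<and> is_outcome TYPE('o) R2 T X2"
      then obtain a1 a2 :: 'o where
        o1: "R1 (iter R1 T a1) = iter R1 T a1" "X1 = iter R1 T a1" and
        o2: "R2 (iter R2 T a2) = iter R2 T a2" "X2 = iter R2 T a2"
        unfolding is_outcome_def by blast
      have "X2 \<le> X1" using fix_le[OF A _ _ o2(1) md[rule_format]] h o1 o2 by blast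
      moreover have "X1 \<le> X2" using fix_le[OF A _ _ o1(1) md[rule_format]] h o1 o2 by blast
      ultimately show "X1 = X2" by simp
    qed
  qed
  have P5: "(\<forall>\<alpha>::'o. MD p T DT D \<alpha>) \<longrightarrow>
        (\<forall>X. is_outcome TYPE('o) (MLS p T D) T X
              \<longleftrightarrow> is_outcome TYPE('o) (bar (MLS p T D)) T X)
        \<and> ((\<nexists>f::'o \<Rightarrow> ('i \<Rightarrow> 's set). inj f) \<longrightarrow> (\<exists>X. is_outcome TYPE('o) (MLS p T D) T X))"
  proof (intro impI)
    assume md: "\<forall>\<alpha>::'o. MD p T DT D \<alpha>"
    have eqZ: "iter (MLS p T D) T = ?X" using P4 md by auto
    have eqF: "MLS p T D (?X a) = bar (MLS p T D) (?X a)" for a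
      using bar_MLS_X(1)[OF A md[rule_format, of a]] by simp
    have E: "\<forall>X. is_outcome TYPE('o) (MLS p T D) T X
              \<longleftrightarrow> is_outcome TYPE('o) (bar (MLS p T D)) T X"
      unfolding is_outcome_def eqZ eqF by blast
    moreover have "(\<nexists>f::'o \<Rightarrow> ('i \<Rightarrow> 's set). inj f) \<longrightarrow> (\<exists>X. is_outcome TYPE('o) (MLS p T D) T X)"
    proof
      assume "\<nexists>f::'o \<Rightarrow> ('i \<Rightarrow> 's set). inj f"
      then have "\<exists>X. is_outcome TYPE('o) (bar (MLS p T D)) T X"
        by (intro outcome_exists) (auto simp: bar_def)
      then show "\<exists>X. is_outcome TYPE('o) (MLS p T D) T X" using E by blast
    qed
    ultimately show "(\<forall>X. is_outcome TYPE('o) (MLS p T D) T X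
              \<longleftrightarrow> is_outcome TYPE('o) (bar (MLS p T D)) T X)
        \<and> ((\<nexists>f::'o \<Rightarrow> ('i \<Rightarrow> 's set). inj f) \<longrightarrow> (\<exists>X. is_outcome TYPE('o) (MLS p T D) T X))"
      by blast
  qed
  show ?thesis using P1 P2 P3 P4 P5 by blast
qed

end
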